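(* Assume $e_{-1}+e_{+1}<1$ and $\delta_{\tilde p}\neq 0$, and let $$\alpha=1-(1-e_{-1}-e_{+1})\cdot\frac{\delta_p}{\delta_{\tilde p}}.$$ Let $\mathcal F$ be a class of measurable classifiers $f:\mathcal X\to\{-1,+1\}$ and let $\tilde f^*\in\arg\min_{f\in\mathcal F}\mathbb E_{\tilde{\mathcal D}}[\mathbb 1_{\alpha\text{-peer}}(f(X),\tilde Y)]$. Then $\tilde f^*\in\arg\min_{f\in\mathcal F}R_{\mathcal D}(f)$, where $R_{\mathcal D}(f)=\mathbb P_{(X,Y)\sim\mathcal D}(f(X)\neq Y)$.
   Context: Let $\mathcal X\subseteq\mathbb R^d$ and let $(X,Y)$ be a random pair with distribution $\mathcal D$ on $\mathcal X\times\{-1,+1\}$, with $p:=\mathbb P(Y=+1)\in(0,1)$. A noisy label $\tilde Y\in\{-1,+1\}$ is generated with noise rates $e_{+1}:=\mathbb P(\tilde Y=-1\mid Y=+1)$, $e_{-1}:=\mathbb P(\tilde Y=+1\mid Y=-1)$, where $\tilde Y$ is conditionally independent of $X$ given $Y$; $\tilde{\mathcal D}$ is the distribution of $(X,\tilde Y)$. Let $\delta_p:=\mathbb P(Y=+1)-\mathbb P(Y=-1)$ and $\delta_{\tilde p}:=\mathbb P(\tilde Y=+1)-\mathbb P(\tilde Y=-1)$. The 0-1 loss is $\mathbb 1(a,b)=1$ if $a\neq b$ and $0$ otherwise. For a weight $\alpha$, the expected $\alpha$-weighted 0-1 peer loss is $$\mathbb E_{\tilde{\mathcal D}}[\mathbb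 1_{\alpha\text{-peer}}(f(X),\tilde Y)]:=\mathbb E[\mathbb 1(f(X),\tilde Y)]-\alpha\,\mathbb E[\mathbb 1(f(X_1),\tilde Y_2)],$$ where $(X,\tilde Y),(X_1,\tilde Y_1),(X_2,\tilde Y_2)$ are i.i.d. draws from $\tilde{\mathcal D}$. *)

theory Defs
  imports "HOL-Probability.Probability"
begin

text \<open>Labels are integers in {-1,+1}. The whole experiment (X, Y, noisy label Yt)
lives on one probability space M.\<close>

definition pY :: "'w measure \<Rightarrow> ('w \<Rightarrow> int) \<Rightarrow> int \<Rightarrow> real" where
  "pY M Y y = measure M {\<omega> \<in> space M. Y \<omega> = y}"

definition noise_rate :: "'w measure \<Rightarrow> ('w \<Rightarrow> int) \<Rightarrow> ('w \<Rightarrow> int) \<Rightarrow> int \<Rightarrow> real" where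
  "noise_rate M Y Yt y =
     measure M {\<omega> \<in> space M. Y \<omega> = y \<and> Yt \<omega> = - y} / pY M Y y"

definition delta :: "'w measure \<Rightarrow> ('w \<Rightarrow> int) \<Rightarrow> real" where
  "delta M Y = pY M Y 1 - pY M Y (-1)"

definition noisy_dist :: "'w measure \<Rightarrow> ('w \<Rightarrow> 'x::topological_space) \<Rightarrow> ('w \<Rightarrow> int)
    \<Rightarrow> ('x \<times> int) measure" where
  "noisy_dist M X Yt = distr M (borel \<Otimes>\<^sub>M count_space UNIV) (\<lambda>\<omega>. (X \<omega>, Yt \<omega>))"

text \<open>Expected alpha-weighted 0-1 peer loss: E[1(f X, Yt)] - alpha * E[1(f X1, Yt2)],
  with (X1,Yt1),(X2,Yt2) i.i.d. from the noisy distribution (product measure).\<close>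
definition peer_loss :: "'w measure \<Rightarrow> ('w \<Rightarrow> 'x::topological_space) \<Rightarrow> ('w \<Rightarrow> int)
    \<Rightarrow> real \<Rightarrow> ('x \<Rightarrow> int) \<Rightarrow> real" where
  "peer_loss M X Yt \<alpha> f =
     (LINT z | noisy_dist M X Yt. (if f (fst z) \<noteq> snd z then 1 else 0))
     - \<alpha> * (LINT zz | (noisy_dist M X Yt \<Otimes>\<^sub>M noisy_dist M X Yt).
                 (if f (fst (fst zz)) \<noteq> snd (snd zz) then 1 else 0))"

definition risk :: "'w measure \<Rightarrow> ('w \<Rightarrow> 'x) \<Rightarrow> ('w \<Rightarrow> int) \<Rightarrow> ('x \<Rightarrow> int) \<Rightarrow> real" where
  "risk M X Y f = measure M {\<omega> \<in> space M. f (X \<omega>) \<noteq> Y \<omega>}"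

end

theory Submission
  imports Defs
begin

lemma alg:
  fixes p r1 rm a b \<alpha> E1 Em :: real
  assumes p0: "0 < p" and p1: "p < 1" and d: "2*(a+b) - 1 \<noteq> 0"
   and E1: "E1 = (p-a)/p" and Em: "Em = b/(1-p)"
   and al: "\<alpha> = 1 - (1 - Em - E1) * (p - (1-p)) / ((a+b) - (1-(a+b)))"
  shows "r1*(p-a)/p + rm*(1-p-b)/(1-p) + (p-r1)*a/p + (1-p-rm)*b/(1-p)
     - \<alpha> * ((a+b) + (r1+rm) * ((1-(a+b)) - (a+b)))
   = b/(1-p) - \<alpha>*(a+b) + (1 - Em - E1) * (rm + (p - r1))"
proof -
  have q: "1 - p \<noteq> 0" "p \<noteq> 0" "(a+b) - (1-(a+b)) \<noteq> 0" using p0 p1 d by auto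
  have A: "a = p - p*E1" using E1 q by (simp add: field_simps)
  have B: "b = (1-p)*Em" using Em q by (simp add: field_simps)
  have aD: "\<alpha> * ((a+b) - (1-(a+b))) = ((a+b) - (1-(a+b))) - (1 - Em - E1) * (p - (1-p))"
    using al q by (simp add: field_simps)
  have t1: "r1*(p-a)/p = r1*E1" "rm*(1-p-b)/(1-p) = rm*(1-Em)" "(p-r1)*a/p = (p-r1)*(1-E1)"
     "(1-p-rm)*b/(1-p) = (1-p-rm)*Em" "b/(1-p) = Em"
    using q by (simp_all add: A B field_simps)
  show ?thesis unfolding t1 using aD unfolding A B by algebra
qed

lemma meas_split:
  assumes "prob_space M" "B \<in> sets M" "C \<in> sets M" "B \<inter> C = {}" "A = B \<union> C"
  shows "measure M A = measure M B + measure M C"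
  using assms prob_space.finite_measure finite_measure.finite_measure_Union by metis

lemma peer_loss_eq:
  fixes f :: "'x::topological_space \<Rightarrow> int" and X :: "'w \<Rightarrow> 'x"
  assumes M: "prob_space M" and fm: "f \<in> borel_measurable borel" and X_meas: "X \<in> borel_measurable M"
   and Yt_meas: "Yt \<in> measurable M (count_space UNIV)"
   and frng: "\<forall>\<omega>\<in>space M. f (X \<omega>) \<in> {-1, 1}"
   and Yt_range: "\<forall>\<omega>\<in>space M. Yt \<omega> \<in> {-1, 1}"
  shows "peer_loss M X Yt \<alpha> f = measure M {\<omega>\<in>space M. f (X \<omega>) \<noteq> Yt \<omega>}
     - \<alpha> * (measure M {\<omega>\<in>space M. Yt \<omega> = 1} + measure M {\<omega>\<in>space M. f (X \<omega>) = 1}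
         * (measure M {\<omega>\<in>space M. Yt \<omega> = -1} - measure M {\<omega>\<in>space M. Yt \<omega> = 1}))"
proof -
  interpret M: prob_space M by (rule M)
  have fc[measurable]: "f \<in> measurable borel (count_space UNIV)"
    using fm by (simp add: measurable_cong_sets[OF refl sets_borel_eq_count_space])
  note [measurable] = X_meas Yt_meas
  define N where "N = noisy_dist M X Yt"
  have T[measurable]: "(\<lambda>\<omega>. (X \<omega>, Yt \<omega>)) \<in> measurable M (borel \<Otimes>\<^sub>M count_space UNIV)" by measurable
  have pN: "prob_space N" unfolding N_def noisy_dist_def by (rule M.prob_space_distr) (rule T)
  interpret NN: pair_prob_space N N
    using pN by (simp add: pair_prob_space_def pair_sigma_finite_def prob_space_imp_sigma_finite)
  have ID: "integral\<^sup>L N g = (LINT \<omega> | M. g (X \<omega>, Yt \<omega>))"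
    if "g \<in> borel_measurable (borel \<Otimes>\<^sub>M count_space UNIV)" for g :: "_ \<Rightarrow> real"
    unfolding N_def noisy_dist_def by (rule integral_distr[OF T that])
  have sN: "sets N = sets (borel \<Otimes>\<^sub>M count_space UNIV)" unfolding N_def noisy_dist_def by simp
  have T1: "(LINT z | N. (if f (fst z) \<noteq> snd z then 1 else (0::real))) = measure M {\<omega>\<in>space M. f (X \<omega>) \<noteq> Yt \<omega>}"
  proof -
    have "(LINT z | N. (if f (fst z) \<noteq> snd z then 1 else (0::real))) = (LINT \<omega> | M. (if f (X \<omega>) \<noteq> Yt \<omega> then 1 else (0::real)))"
      using ID[of "\<lambda>z. if f (fst z) \<noteq> snd z then 1 else 0"] by simp
    also have "\<dots> = (LINT \<omega> | M. indicator {\<omega>\<in>space M. f (X \<omega>) \<noteq> Yt \<omega>} \<omega>)"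
      by (rule Bochner_Integration.integral_cong) (auto simp: indicator_def)
    also have "\<dots> = measure M {\<omega>\<in>space M. f (X \<omega>) \<noteq> Yt \<omega>}"
      by (simp add: Int_absorb2 subset_iff)
    finally show ?thesis .
  qed
  have inner: "(LINT z | N. (if c \<noteq> snd z then 1 else (0::real))) = measure M {\<omega>\<in>space M. c \<noteq> Yt \<omega>}" for c :: int
  proof -
    have "(LINT z | N. (if c \<noteq> snd z then 1 else (0::real))) = (LINT \<omega> | M. (if c \<noteq> Yt \<omega> then 1 else (0::real)))"
      using ID[of "\<lambda>z. if c \<noteq> snd z then 1 else 0"] by simp
    also have "\<dots> = (LINT \<omega> | M. indicator {\<omega>\<in>space M. c \<noteq> Yt \<omega>} \<omega>)"
      by (rule Bochner_Integration.integral_cong) (auto simp: indicator_def)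
    also have "\<dots> = measure M {\<omega>\<in>space M. c \<noteq> Yt \<omega>}"
      by (simp add: Int_absorb2 subset_iff)
    finally show ?thesis .
  qed
  define h where "h c = measure M {\<omega>\<in>space M. c \<noteq> Yt \<omega>}" for c :: int
  have hm[measurable]: "h \<in> borel_measurable (count_space UNIV)" by simp
  have g_meas: "(\<lambda>zz. if f (fst (fst zz)) \<noteq> snd (snd zz) then 1 else (0::real)) \<in> borel_measurable (N \<Otimes>\<^sub>M N)"
    unfolding measurable_cong_sets[OF sets_pair_measure_cong[OF sN sN] refl] by measurable
  have int: "integrable (N \<Otimes>\<^sub>M N) (\<lambda>zz. if f (fst (fst zz)) \<noteq> snd (snd zz) then 1 else (0::real))"
    by (rule NN.P.integrable_const_bound[where B=1]) (auto intro: g_meas)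
  have T2: "(LINT zz | (N \<Otimes>\<^sub>M N). (if f (fst (fst zz)) \<noteq> snd (snd zz) then 1 else (0::real)))
       = (LINT x | N. h (f (fst x)))"
  proof -
    have "(LINT zz | (N \<Otimes>\<^sub>M N). (if f (fst (fst zz)) \<noteq> snd (snd zz) then 1 else (0::real)))
       = (LINT x | N. (LINT y | N. (if f (fst x) \<noteq> snd y then 1 else (0::real))))"
      using NN.integral_fst'[OF int] by (simp only: fst_conv snd_conv)
    also have "\<dots> = (LINT x | N. h (f (fst x)))"
      by (rule Bochner_Integration.integral_cong[OF refl]) (simp only: inner h_def)
    finally show ?thesis .
  qed
  also have "\<dots> = (LINT \<omega> | M. h (f (X \<omega>)))"
  proof -
    have hz: "(\<lambda>z. h (f (fst z))) \<in> borel_measurable (borel \<Otimes>\<^sub>M count_space UNIV)" by measurable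
    show ?thesis using ID[OF hz] by simp
  qed
  also have "\<dots> = (LINT \<omega> | M. measure M {\<omega>\<in>space M. Yt \<omega> = 1} + indicator {\<omega>\<in>space M. f (X \<omega>) = 1} \<omega>
         * (measure M {\<omega>\<in>space M. Yt \<omega> = -1} - measure M {\<omega>\<in>space M. Yt \<omega> = 1}))"
  proof (rule Bochner_Integration.integral_cong[OF refl])
    fix \<omega> assume w: "\<omega> \<in> space M"
    have e1: "{\<omega>\<in>space M. Yt \<omega> \<noteq> 1} = {\<omega>\<in>space M. Yt \<omega> = -1}" using Yt_range by force
    have e2: "{\<omega>\<in>space M. Yt \<omega> \<noteq> -1} = {\<omega>\<in>space M. Yt \<omega> = 1}" using Yt_range by force
    have e3: "{\<omega>\<in>space M. -1 \<noteq> Yt \<omega>} = {\<omega>\<in>space M. Yt \<omega> = 1}" using Yt_range by force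
    show "h (f (X \<omega>)) = measure M {\<omega>\<in>space M. Yt \<omega> = 1} + indicator {\<omega>\<in>space M. f (X \<omega>) = 1} \<omega>
         * (measure M {\<omega>\<in>space M. Yt \<omega> = -1} - measure M {\<omega>\<in>space M. Yt \<omega> = 1})"
    proof -
      have "f (X \<omega>) = -1 \<or> f (X \<omega>) = 1" using frng w by auto
      thus ?thesis using w by (elim disjE) (simp_all add: h_def e1 e2 e3 indicator_def)
    qed
  qed
  also have "\<dots> = measure M {\<omega>\<in>space M. Yt \<omega> = 1} + measure M {\<omega>\<in>space M. f (X \<omega>) = 1}
         * (measure M {\<omega>\<in>space M. Yt \<omega> = -1} - measure M {\<omega>\<in>space M. Yt \<omega> = 1})"
  proof -
    let ?A = "{\<omega>\<in>space M. f (X \<omega>) = 1}"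
    let ?c = "measure M {\<omega>\<in>space M. Yt \<omega> = 1}"
    let ?d = "measure M {\<omega>\<in>space M. Yt \<omega> = -1} - measure M {\<omega>\<in>space M. Yt \<omega> = 1}"
    have Am: "?A \<in> sets M" by measurable
    have i1: "integrable M (\<lambda>\<omega>. indicator ?A \<omega> * ?d)"
      using Am by (intro integrable_mult_left integrable_real_indicator) (auto simp: M.emeasure_finite less_top[symmetric])
    have "(LINT \<omega> | M. ?c + indicator ?A \<omega> * ?d) = (LINT \<omega> | M. ?c) + (LINT \<omega> | M. indicator ?A \<omega> * ?d)"
      by (rule Bochner_Integration.integral_add[OF _ i1]) simp
    also have "\<dots> = ?c + measure M ?A * ?d"
      by (simp add: Int_absorb2 subset_iff M.prob_space)
    finally show ?thesis .
  qed
  finally have T2': "(LINT zz | (N \<Otimes>\<^sub>M N). (if f (fst (fst zz)) \<noteq> snd (snd zz) then 1 else (0::real))) =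
     measure M {\<omega>\<in>space M. Yt \<omega> = 1} + measure M {\<omega>\<in>space M. f (X \<omega>) = 1}
         * (measure M {\<omega>\<in>space M. Yt \<omega> = -1} - measure M {\<omega>\<in>space M. Yt \<omega> = 1})" .
  show ?thesis unfolding peer_loss_def N_def[symmetric] T1 T2' ..
qed

lemma key:
  fixes f :: "'x::topological_space \<Rightarrow> int" and X :: "'w \<Rightarrow> 'x"
  assumes M: "prob_space M" and fm: "f \<in> borel_measurable borel" and X_meas: "X \<in> borel_measurable M"
    and Y_meas: "Y \<in> measurable M (count_space UNIV)"
    and Yt_meas: "Yt \<in> measurable M (count_space UNIV)"
    and Y_range: "\<forall>\<omega>\<in>space M. Y \<omega> \<in> {-1, 1}"
    and Yt_range: "\<forall>\<omega>\<in>space M. Yt \<omega> \<in> {-1, 1}"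
    and frng: "\<forall>\<omega>\<in>space M. f (X \<omega>) \<in> {-1, 1}"
    and p_pos: "0 < pY M Y 1" and p_lt1: "pY M Y 1 < 1"
    and cond_indep: "\<forall>A\<in>sets borel. \<forall>y z.
        measure M {\<omega> \<in> space M. X \<omega> \<in> A \<and> Y \<omega> = y \<and> Yt \<omega> = z} * pY M Y y
        = measure M {\<omega> \<in> space M. X \<omega> \<in> A \<and> Y \<omega> = y}
          * measure M {\<omega> \<in> space M. Y \<omega> = y \<and> Yt \<omega> = z}"
    and dpt: "delta M Yt \<noteq> 0"
    and alpha: "\<alpha> = 1 - (1 - noise_rate M Y Yt (-1) - noise_rate M Y Yt 1)
                          * delta M Y / delta M Yt"
  shows "peer_loss M X Yt \<alpha> f = measure M {\<omega>\<in>space M. Y \<omega> = -1 \<and> Yt \<omega> = 1} / pY M Y (-1)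
     - \<alpha> * measure M {\<omega>\<in>space M. Yt \<omega> = 1}
     + (1 - noise_rate M Y Yt (-1) - noise_rate M Y Yt 1) * risk M X Y f"
proof -
  interpret M: prob_space M by (rule M)
  have fc[measurable]: "f \<in> measurable borel (count_space UNIV)"
    using fm by (simp add: measurable_cong_sets[OF refl sets_borel_eq_count_space])
  note [measurable] = X_meas Yt_meas Y_meas
  note rng = Y_range Yt_range frng
  define Q where "Q a y z = measure M {\<omega>\<in>space M. f (X \<omega>) = a \<and> Y \<omega> = y \<and> Yt \<omega> = z}" for a y z
  define r where "r a y = measure M {\<omega>\<in>space M. f (X \<omega>) = a \<and> Y \<omega> = y}" for a y
  define s where "s y z = measure M {\<omega>\<in>space M. Y \<omega> = y \<and> Yt \<omega> = z}" for y z
  define p where "p = pY M Y 1"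
  have ci: "Q a y z * pY M Y y = r a y * s y z" for a y z
  proof -
    have A: "f -` {a} \<in> sets borel" using measurable_sets[OF fc, of "{a}"] by simp
    show ?thesis using cond_indep A unfolding Q_def r_def s_def by auto
  qed
  have S1: "pY M Y 1 + pY M Y (-1) = 1"
  proof -
    have "measure M (space M) = pY M Y 1 + pY M Y (-1)" unfolding pY_def
      by (rule meas_split[OF M], measurable, measurable, use rng in force, use rng in force)
    thus ?thesis by (simp add: M.prob_space)
  qed
  have S2: "pY M Y y = s y 1 + s y (-1)" for y unfolding pY_def s_def
    by (rule meas_split[OF M], measurable, measurable, use rng in force, use rng in force)
  have S4: "measure M {\<omega>\<in>space M. Yt \<omega> = z} = s 1 z + s (-1) z" for z unfolding s_def
    by (rule meas_split[OF M], measurable, measurable, use rng in force, use rng in force)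
  have S6: "pY M Y y = r 1 y + r (-1) y" for y unfolding pY_def r_def
    by (rule meas_split[OF M], measurable, measurable, use rng in force, use rng in force)
  have S8: "measure M {\<omega>\<in>space M. f (X \<omega>) = 1} = r 1 1 + r 1 (-1)" unfolding r_def
    by (rule meas_split[OF M], measurable, measurable, use rng in force, use rng in force)
  have S9: "risk M X Y f = r 1 (-1) + r (-1) 1" unfolding risk_def r_def
    by (rule meas_split[OF M], measurable, measurable, use rng in force, use rng in force)
  have S10: "measure M {\<omega>\<in>space M. f (X \<omega>) \<noteq> Yt \<omega>} = 
     measure M {\<omega>\<in>space M. f (X \<omega>) = 1 \<and> Yt \<omega> = -1} + measure M {\<omega>\<in>space M. f (X \<omega>) = -1 \<and> Yt \<omega> = 1}"
    by (rule meas_split[OF M], measurable, measurable, use rng in force, use rng in force)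
  have S11: "measure M {\<omega>\<in>space M. f (X \<omega>) = a \<and> Yt \<omega> = z} = Q a 1 z + Q a (-1) z" for a z
    unfolding Q_def by (rule meas_split[OF M], measurable, measurable, use rng in force, use rng in force)
  have p0: "pY M Y 1 \<noteq> 0" "pY M Y (-1) \<noteq> 0" using p_pos p_lt1 S1 by auto
  have pm: "pY M Y (-1) = 1 - pY M Y 1" using S1 by simp
  have Qv: "Q a y z = r a y * s y z / pY M Y y" if "y = 1 \<or> y = -1" for a y z
    using ci[of a y z] p0 that by (auto simp: field_simps)
  have s1m: "s 1 (-1) = pY M Y 1 - s 1 1" using S2[of 1] by simp
  have smm: "s (-1) (-1) = (1 - pY M Y 1) - s (-1) 1" using S2[of "-1"] pm by simp
  have rm1: "r (-1) 1 = pY M Y 1 - r 1 1" using S6[of 1] by simp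
  have rmm: "r (-1) (-1) = (1 - pY M Y 1) - r 1 (-1)" using S6[of "-1"] pm by simp
  have nr1: "noise_rate M Y Yt 1 = (pY M Y 1 - s 1 1) / pY M Y 1"
    unfolding noise_rate_def using s1m by (simp add: s_def)
  have nrm: "noise_rate M Y Yt (-1) = s (-1) 1 / (1 - pY M Y 1)"
    unfolding noise_rate_def using pm by (simp add: s_def)
  have dY: "delta M Y = pY M Y 1 - (1 - pY M Y 1)" unfolding delta_def using pm by simp
  have dYt: "delta M Yt = (s 1 1 + s (-1) 1) - (1 - (s 1 1 + s (-1) 1))"
    unfolding delta_def pY_def S4 using s1m smm by simp
  have d: "2*(s 1 1 + s (-1) 1) - 1 \<noteq> 0" using dpt dYt by simp
  have al: "\<alpha> = 1 - (1 - s (-1) 1 / (1 - pY M Y 1) - (pY M Y 1 - s 1 1) / pY M Y 1) * (pY M Y 1 - (1 - pY M Y 1))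
      / ((s 1 1 + s (-1) 1) - (1 - (s 1 1 + s (-1) 1)))"
    using alpha unfolding nr1 nrm dY dYt by simp
  have Pl: "peer_loss M X Yt \<alpha> f = 
     r 1 1 * (pY M Y 1 - s 1 1) / pY M Y 1 + r 1 (-1) * (1 - pY M Y 1 - s (-1) 1) / (1 - pY M Y 1)
     + (pY M Y 1 - r 1 1) * s 1 1 / pY M Y 1 + (1 - pY M Y 1 - r 1 (-1)) * s (-1) 1 / (1 - pY M Y 1)
     - \<alpha> * ((s 1 1 + s (-1) 1) + (r 1 1 + r 1 (-1)) * ((1 - (s 1 1 + s (-1) 1)) - (s 1 1 + s (-1) 1)))"
  proof -
    have "peer_loss M X Yt \<alpha> f = (Q 1 1 (-1) + Q 1 (-1) (-1)) + (Q (-1) 1 1 + Q (-1) (-1) 1)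
       - \<alpha> * ((s 1 1 + s (-1) 1) + (r 1 1 + r 1 (-1)) * ((s 1 (-1) + s (-1) (-1)) - (s 1 1 + s (-1) 1)))"
      unfolding peer_loss_eq[OF M fm X_meas Yt_meas frng Yt_range] S10 S11 S8 S4 by simp
    also have "\<dots> = r 1 1 * (pY M Y 1 - s 1 1) / pY M Y 1 + r 1 (-1) * (1 - pY M Y 1 - s (-1) 1) / (1 - pY M Y 1)
     + (pY M Y 1 - r 1 1) * s 1 1 / pY M Y 1 + (1 - pY M Y 1 - r 1 (-1)) * s (-1) 1 / (1 - pY M Y 1)
     - \<alpha> * ((s 1 1 + s (-1) 1) + (r 1 1 + r 1 (-1)) * ((1 - (s 1 1 + s (-1) 1)) - (s 1 1 + s (-1) 1)))"
      unfolding Qv[of 1, simplified] Qv[of "-1", simplified] s1m smm rm1 rmm pm by simp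
    finally show ?thesis .
  qed
  have A: "\<dots> = s (-1) 1 / (1 - pY M Y 1) - \<alpha> * (s 1 1 + s (-1) 1)
     + (1 - s (-1) 1 / (1 - pY M Y 1) - (pY M Y 1 - s 1 1) / pY M Y 1) * (r 1 (-1) + (pY M Y 1 - r 1 1))"
    by (rule alg[OF p_pos p_lt1 d refl refl al])
  show ?thesis unfolding Pl A S9 rm1 nr1 nrm S4 pm s_def[symmetric] by simp
qed
theorem theorem4:
  fixes M :: "'w measure" and X :: "'w \<Rightarrow> real ^ 'd"
    and Y Yt :: "'w \<Rightarrow> int" and F :: "(real ^ 'd \<Rightarrow> int) set"
    and \<X> :: "(real ^ 'd) set" and fstar :: "real ^ 'd \<Rightarrow> int" and \<alpha> :: real
  assumes M: "prob_space M"
    and X_meas: "X \<in> borel_measurable M"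
    and X_in: "\<forall>\<omega>\<in>space M. X \<omega> \<in> \<X>"
    and Y_meas: "Y \<in> measurable M (count_space UNIV)"
    and Yt_meas: "Yt \<in> measurable M (count_space UNIV)"
    and Y_range: "\<forall>\<omega>\<in>space M. Y \<omega> \<in> {-1, 1}"
    and Yt_range: "\<forall>\<omega>\<in>space M. Yt \<omega> \<in> {-1, 1}"
    and p_pos: "0 < pY M Y 1" and p_lt1: "pY M Y 1 < 1"
    and cond_indep: "\<forall>A\<in>sets borel. \<forall>y z.
        measure M {\<omega> \<in> space M. X \<omega> \<in> A \<and> Y \<omega> = y \<and> Yt \<omega> = z} * pY M Y y
        = measure M {\<omega> \<in> space M. X \<omega> \<in> A \<and> Y \<omega> = y}
          * measure M {\<omega> \<in> space M. Y \<omega> = y \<and> Yt \<omega> = z}"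
    and noise: "noise_rate M Y Yt (-1) + noise_rate M Y Yt 1 < 1"
    and dpt: "delta M Yt \<noteq> 0"
    and alpha: "\<alpha> = 1 - (1 - noise_rate M Y Yt (-1) - noise_rate M Y Yt 1)
                          * delta M Y / delta M Yt"
    and F: "\<forall>f\<in>F. f \<in> borel_measurable borel \<and> (\<forall>x\<in>\<X>. f x \<in> {-1, 1})"
    and fstar_in: "fstar \<in> F"
    and fstar_min: "\<forall>f\<in>F. peer_loss M X Yt \<alpha> fstar \<le> peer_loss M X Yt \<alpha> f"
  shows "fstar \<in> F \<and> (\<forall>f\<in>F. risk M X Y fstar \<le> risk M X Y f)"
proof -
  have c: "0 < 1 - noise_rate M Y Yt (-1) - noise_rate M Y Yt 1" using noise by simp
  have K: "peer_loss M X Yt \<alpha> f = measure M {\<omega>\<in>space M. Y \<omega> = -1 \<and> Yt \<omega> = 1} / pY M Y (-1)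
     - \<alpha> * measure M {\<omega>\<in>space M. Yt \<omega> = 1}
     + (1 - noise_rate M Y Yt (-1) - noise_rate M Y Yt 1) * risk M X Y f" if "f \<in> F" for f
  proof (rule key[OF M _ X_meas Y_meas Yt_meas Y_range Yt_range _ p_pos p_lt1 cond_indep dpt alpha])
    show "f \<in> borel_measurable borel" using F that by blast
    show "\<forall>\<omega>\<in>space M. f (X \<omega>) \<in> {-1, 1}" using F that X_in by blast
  qed
  have "risk M X Y fstar \<le> risk M X Y f" if "f \<in> F" for f
  proof -
    have "peer_loss M X Yt \<alpha> fstar \<le> peer_loss M X Yt \<alpha> f" using fstar_min that by blast
    hence "(1 - noise_rate M Y Yt (-1) - noise_rate M Y Yt 1) * risk M X Y fstar
        \<le> (1 - noise_rate M Y Yt (-1) - noise_rate M Y Yt 1) * risk M X Y f"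
      unfolding K[OF fstar_in] K[OF that] by simp
    thus ?thesis using c by simp
  qed
  thus ?thesis using fstar_in by blast
qed

end
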